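(* Let $d\ge1$, let $C>0$, $t_0>0$, and let $u_0(x)=Ce^{-|x|^2/(4t_0)}$ on $\mathbb{R}^d$. For each integer $k\ge0$ let $$u_k(x,t)=\sum_{|\alpha|\le k}\frac{(-1)^{|\alpha|}}{\alpha!}\Big(\int_{\mathbb{R}^d}y^\alpha u_0(y)\,dy\Big)D^\alpha G(x,t).$$ Fix $t$ with $0<t<t_0$. Then $\|u_k(\cdot,t)\|_{L^\infty(\mathbb{R}^d)}\to\infty$ as $k\to\infty$. More precisely: (i) if $d=1$, there is a constant $B>0$ independent of $k$ (depending on $C,t,t_0$) such that for every sufficiently large $k$, $$|u_k(0,t)|\ge B\Big(\frac{t_0}{t}\Big)^{\lfloor k/2\rfloor}\sqrt{\frac{1}{\lfloor k/2\rfloor-1}};$$ (ii) if $d\ge2$, there is a constant $c>0$ independent of $k$ (depending on $C,d,t,t_0$) such that for every integer $k\ge0$, $$|u_k(0,t)|\ge c\Big(\frac{t_0}{t}-1\Big)\Big(\frac{t_0}{t}\Big)^{\lfloor k/2\rfloor-1}.$$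
   Context: $G(x,t)=(4\pi t)^{-d/2}\exp(-|x|^2/(4t))$ is the heat kernel. Multi-index notation: $\alpha\in\mathbb{Z}_{\ge0}^d$, $|\alpha|=\sum\alpha_i$, $\alpha!=\prod\alpha_i!$, $y^\alpha=\prod y_i^{\alpha_i}$, $D^\alpha=\partial_{x_1}^{\alpha_1}\cdots\partial_{x_d}^{\alpha_d}$. $\lfloor\cdot\rfloor$ is the floor function. (The paper gives the explicit constant $c=C/((4t)^{d/2}\Gamma(d/2))$ in part (ii).) *)

theory Defs
  imports "HOL-Analysis.Analysis" "HOL-Probability.Essential_Supremum"
begin

text \<open>Points of R^d are functions nat => real; only coordinates i < d matter.
  Lebesgue measure on R^d is the product measure PiM {..<d} (\<lambda>_. lborel).\<close>

definition Rd :: "nat \<Rightarrow> (nat \<Rightarrow> real) measure" where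
  "Rd d = PiM {..<d} (\<lambda>_. lborel)"

definition sqnorm :: "nat \<Rightarrow> (nat \<Rightarrow> real) \<Rightarrow> real" where
  "sqnorm d x = (\<Sum>i<d. (x i)^2)"

definition heat :: "nat \<Rightarrow> (nat \<Rightarrow> real) \<Rightarrow> real \<Rightarrow> real" where
  "heat d x t = (4 * pi * t) powr (- real d / 2) * exp (- sqnorm d x / (4 * t))"

definition pdx :: "nat \<Rightarrow> ((nat \<Rightarrow> real) \<Rightarrow> real) \<Rightarrow> (nat \<Rightarrow> real) \<Rightarrow> real" where
  "pdx i f x = deriv (\<lambda>s. f (x(i := x i + s))) 0"

text \<open>D^alpha = d_{x_1}^{alpha_1} ... d_{x_d}^{alpha_d}, coordinates indexed 0..d-1.\<close>
fun Dmulti :: "nat \<Rightarrow> (nat \<Rightarrow> nat) \<Rightarrow> ((nat \<Rightarrow> real) \<Rightarrow> real) \<Rightarrow> (nat \<Rightarrow> real) \<Rightarrow> real" where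
  "Dmulti 0 \<alpha> f = f"
| "Dmulti (Suc i) \<alpha> f = (pdx i ^^ \<alpha> i) (Dmulti i \<alpha> f)"

definition mabs :: "nat \<Rightarrow> (nat \<Rightarrow> nat) \<Rightarrow> nat" where
  "mabs d \<alpha> = (\<Sum>i<d. \<alpha> i)"

definition mfact :: "nat \<Rightarrow> (nat \<Rightarrow> nat) \<Rightarrow> nat" where
  "mfact d \<alpha> = (\<Prod>i<d. fact (\<alpha> i))"

definition mpow :: "nat \<Rightarrow> (nat \<Rightarrow> real) \<Rightarrow> (nat \<Rightarrow> nat) \<Rightarrow> real" where
  "mpow d y \<alpha> = (\<Prod>i<d. (y i) ^ (\<alpha> i))"

definition multi_idx :: "nat \<Rightarrow> nat \<Rightarrow> (nat \<Rightarrow> nat) set" where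
  "multi_idx d k = {\<alpha>. (\<forall>i\<ge>d. \<alpha> i = 0) \<and> mabs d \<alpha> \<le> k}"

definition u0 :: "nat \<Rightarrow> real \<Rightarrow> real \<Rightarrow> (nat \<Rightarrow> real) \<Rightarrow> real" where
  "u0 d C t0 y = C * exp (- sqnorm d y / (4 * t0))"

definition uk :: "nat \<Rightarrow> real \<Rightarrow> real \<Rightarrow> nat \<Rightarrow> (nat \<Rightarrow> real) \<Rightarrow> real \<Rightarrow> real" where
  "uk d C t0 k x t = (\<Sum>\<alpha>\<in>multi_idx d k.
      ((-1) ^ mabs d \<alpha> / real (mfact d \<alpha>))
      * (integral\<^sup>L (Rd d) (\<lambda>y. mpow d y \<alpha> * u0 d C t0 y))
      * Dmulti d \<alpha> (\<lambda>z. heat d z t) x)"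

end

theory Submission
  imports Defs "HOL-Probability.Probability" "HOL-Computational_Algebra.Formal_Power_Series"
begin


definition gk :: "real \<Rightarrow> real \<Rightarrow> real" where "gk t x = exp (- (x^2) / (4*t))"
definition hk :: "real \<Rightarrow> nat \<Rightarrow> real \<Rightarrow> real" where "hk t n = (deriv ^^ n) (gk t)"

lemma hk_0: "hk t 0 = gk t" by (simp add: hk_def)
lemma hk_Suc_deriv: "hk t (Suc n) = deriv (hk t n)" by (simp add: hk_def)

lemma hk_D:
  assumes t: "t > 0"
  shows "\<forall>m\<le>n. \<forall>s. (hk t m has_real_derivative -(s*hk t m s + real m*hk t (m-1) s)/(2*t)) (at s)"
proof (induction n)
  case 0
  have tnz: "t \<noteq> 0" using t by simp
  have "((\<lambda>y. exp (- (y^2) / (4*t))) has_real_derivative exp (- (y^2) / (4*t)) * (- (2*y) / (4*t))) (at y)" for y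
    using tnz by (auto intro!: derivative_eq_intros simp: power2_eq_square)
  then show ?case by (auto simp: hk_0 gk_def[abs_def] field_simps)
next
  case (Suc n)
  have E: "(hk t m has_real_derivative hk t (Suc m) s) (at s)" if "m \<le> n" for m s
  proof -
    have "(hk t m has_real_derivative -(s*hk t m s + real m*hk t (m-1) s)/(2*t)) (at s)"
      using Suc that by blast
    moreover then have "deriv (hk t m) s = -(s*hk t m s + real m*hk t (m-1) s)/(2*t)"
      by (rule DERIV_imp_deriv)
    ultimately show ?thesis by (simp add: hk_Suc_deriv)
  qed
  have F: "hk t (Suc m) = (\<lambda>s. -(s*hk t m s + real m*hk t (m-1) s)/(2*t))" if "m \<le> n" for m
  proof
    fix s
    have "(hk t m has_real_derivative -(s*hk t m s + real m*hk t (m-1) s)/(2*t)) (at s)"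
      using Suc that by blast
    then show "hk t (Suc m) s = -(s*hk t m s + real m*hk t (m-1) s)/(2*t)"
      by (simp add: hk_Suc_deriv DERIV_imp_deriv)
  qed
  have "(hk t (Suc n) has_real_derivative -(s*hk t (Suc n) s + real (Suc n)*hk t n s)/(2*t)) (at s)" for s
  proof -
    have e1: "(hk t n has_real_derivative hk t (Suc n) s) (at s)" using E by auto
    have e2: "(hk t (n-1) has_real_derivative hk t (Suc (n-1)) s) (at s)" using E by auto
    have d0: "((\<lambda>s. -(s*hk t n s + real n*hk t (n-1) s)/(2*t)) has_real_derivative
       -((1 * hk t n s + hk t (Suc n) s * s) + real n * hk t (Suc (n-1)) s)/(2*t)) (at s)"
      using DERIV_cdivide[OF DERIV_minus[OF DERIV_add[OF DERIV_mult[OF DERIV_ident e1] DERIV_cmult[OF e2, of "real n"]]], of "2*t"]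
      by simp
    have "real n * hk t (Suc (n-1)) s = real n * hk t n s"
      by (cases n) auto
    then have eqv: "-((1 * hk t n s + hk t (Suc n) s * s) + real n * hk t (Suc (n-1)) s)/(2*t)
       = -(s*hk t (Suc n) s + real (Suc n)*hk t n s)/(2*t)" by (simp only:) (simp add: algebra_simps)
    have d1: "((\<lambda>s. -(s*hk t n s + real n*hk t (n-1) s)/(2*t)) has_real_derivative
       -(s*hk t (Suc n) s + real (Suc n)*hk t n s)/(2*t)) (at s)" using d0 unfolding eqv .
    show ?thesis
      using d1 by (simp only: F[of n, OF order_refl, symmetric])
  qed
  then show ?case using Suc by (auto simp: le_Suc_eq)
qed

lemma hk_deriv: "t > 0 \<Longrightarrow> (hk t m has_real_derivative hk t (Suc m) s) (at s)"
proof -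
  assume t: "t > 0"
  have "(hk t m has_real_derivative -(s*hk t m s + real m*hk t (m-1) s)/(2*t)) (at s)"
    using hk_D[OF t, of m] by blast
  moreover then have "deriv (hk t m) s = -(s*hk t m s + real m*hk t (m-1) s)/(2*t)"
    by (rule DERIV_imp_deriv)
  ultimately show ?thesis by (simp add: hk_Suc_deriv)
qed

lemma hk_Suc: "t > 0 \<Longrightarrow> hk t (Suc m) s = -(s*hk t m s + real m*hk t (m-1) s)/(2*t)"
  using hk_D[of t m] by (simp add: hk_Suc_deriv DERIV_imp_deriv)

lemma hk_cont: "t > 0 \<Longrightarrow> isCont (hk t m) s"
  using hk_deriv DERIV_isCont by blast

lemma hk_odd0: "t > 0 \<Longrightarrow> hk t (2*m+1) 0 = 0"
  by (induction m) (auto simp: hk_Suc hk_0)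

lemma hk_even0': "t > 0 \<Longrightarrow> hk t (2*m) 0 * (fact m * (4*t)^m) = (-1)^m * fact (2*m)"
proof (induction m)
  case 0 then show ?case by (simp add: hk_0 gk_def)
next
  case (Suc m)
  have "hk t (2*Suc m) 0 = - (real (2*m+1) * hk t (2*m) 0) / (2*t)"
    using hk_Suc[OF Suc.prems, of "2*m+1" 0] by simp
  then have "hk t (2*Suc m) 0 * (fact (Suc m) * (4*t)^Suc m)
     = - (real (2*m+1) * hk t (2*m) 0) / (2*t) * ((real m + 1) * fact m * (4*t*(4*t)^m))"
    by (simp add: fact_Suc algebra_simps)
  also have "\<dots> = - (real (2*m+1) * (real m + 1) * 2) * (hk t (2*m) 0 * (fact m * (4*t)^m))"
    using Suc.prems by (simp add: field_simps)
  also have "\<dots> = (-1)^Suc m * ((2*real m+2)*(2*real m+1)*fact (2*m))"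
    by (simp only: Suc.IH[OF Suc.prems]) (simp add: algebra_simps)
  also have "(2*real m+2)*(2*real m+1)*fact (2*m) = (fact (2*Suc m) :: real)"
    by (simp add: algebra_simps)
  finally show ?case .
qed

lemma hk_even0: "t > 0 \<Longrightarrow> hk t (2*m) 0 = (-1)^m * fact (2*m) / (fact m * (4*t)^m)"
  using hk_even0'[of t m] by (simp add: field_simps)



definition PP :: "real \<Rightarrow> nat \<Rightarrow> (nat \<Rightarrow> nat) \<Rightarrow> real \<Rightarrow> (nat \<Rightarrow> real) \<Rightarrow> real" where
  "PP t d \<beta> c x = c * (\<Prod>j<d. hk t (\<beta> j) (x j))"

lemma hk_chain: "t > 0 \<Longrightarrow> (f has_real_derivative f') (at y) \<Longrightarrow>
   ((\<lambda>s. hk t m (f s)) has_real_derivative hk t (Suc m) (f y) * f') (at y)"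
  using DERIV_chain2[OF hk_deriv] by blast

lemma pdx_PP:
  assumes t: "t > 0" and i: "i < d"
  shows "pdx i (PP t d \<beta> c) = PP t d (\<beta>(i := Suc (\<beta> i))) c"
proof
  fix x
  define R where "R = (\<Prod>j\<in>{..<d}-{i}. hk t (\<beta> j) (x j))"
  have iA: "i \<in> {..<d}" using i by simp
  have eq: "PP t d \<beta> c (x(i := x i + s)) = (c*R) * hk t (\<beta> i) (x i + s)" for s
  proof -
    have "PP t d \<beta> c (x(i := x i + s)) = c * (hk t (\<beta> i) (x i + s) *
       (\<Prod>j\<in>{..<d}-{i}. hk t (\<beta> j) ((x(i := x i + s)) j)))"
      unfolding PP_def by (subst prod.remove[OF _ iA]) auto
    also have "(\<Prod>j\<in>{..<d}-{i}. hk t (\<beta> j) ((x(i := x i + s)) j)) = R"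
      unfolding R_def by (intro prod.cong) auto
    finally show ?thesis by (simp only: mult_ac)
  qed
  have "((\<lambda>s. (c*R) * hk t (\<beta> i) (x i + s)) has_real_derivative (c*R) * (hk t (Suc (\<beta> i)) (x i + 0) * 1)) (at 0)"
    by (intro DERIV_cmult hk_chain t) (auto intro!: derivative_eq_intros)
  then have "deriv (\<lambda>s. PP t d \<beta> c (x(i := x i + s))) 0 = (c*R) * hk t (Suc (\<beta> i)) (x i)"
    unfolding eq by (simp add: DERIV_imp_deriv)
  also have "\<dots> = PP t d (\<beta>(i := Suc (\<beta> i))) c x"
  proof -
    have "PP t d (\<beta>(i := Suc (\<beta> i))) c x = c * (hk t (Suc (\<beta> i)) (x i) *
       (\<Prod>j\<in>{..<d}-{i}. hk t ((\<beta>(i := Suc (\<beta> i))) j) (x j)))"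
      unfolding PP_def by (subst prod.remove[OF _ iA]) auto
    also have "(\<Prod>j\<in>{..<d}-{i}. hk t ((\<beta>(i := Suc (\<beta> i))) j) (x j)) = R"
      unfolding R_def by (intro prod.cong) auto
    finally show ?thesis by (simp only: mult_ac)
  qed
  finally show "pdx i (PP t d \<beta> c) x = PP t d (\<beta>(i := Suc (\<beta> i))) c x"
    unfolding pdx_def .
qed

lemma pdx_pow_PP:
  assumes t: "t > 0" and i: "i < d"
  shows "(pdx i ^^ n) (PP t d \<beta> c) = PP t d (\<beta>(i := \<beta> i + n)) c"
proof (induction n)
  case 0 then show ?case by simp
next
  case (Suc n)
  have "(pdx i ^^ Suc n) (PP t d \<beta> c) = pdx i ((pdx i ^^ n) (PP t d \<beta> c))" by simp
  also have "\<dots> = pdx i (PP t d (\<beta>(i := \<beta> i + n)) c)" by (simp only: Suc.IH)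
  also have "\<dots> = PP t d ((\<beta>(i := \<beta> i + n))(i := Suc ((\<beta>(i := \<beta> i + n)) i))) c"
    by (rule pdx_PP[OF t i])
  also have "\<dots> = PP t d (\<beta>(i := \<beta> i + Suc n)) c" by simp
  finally show ?case .
qed

lemma Dmulti_PP:
  assumes t: "t > 0"
  shows "m \<le> d \<Longrightarrow> Dmulti m \<alpha> (PP t d \<beta> c) = PP t d (\<lambda>j. if j < m then \<beta> j + \<alpha> j else \<beta> j) c"
proof (induction m)
  case 0 then show ?case by simp
next
  case (Suc m)
  then have "Dmulti (Suc m) \<alpha> (PP t d \<beta> c) = (pdx m ^^ \<alpha> m) (PP t d (\<lambda>j. if j < m then \<beta> j + \<alpha> j else \<beta> j) c)"
    by simp
  also have "\<dots> = PP t d (\<lambda>j. if j < Suc m then \<beta> j + \<alpha> j else \<beta> j) c"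
    using Suc.prems by (subst pdx_pow_PP[OF t]) (auto intro!: arg_cong[where f="\<lambda>b. PP t d b c"])
  finally show ?case .
qed

lemma heat_PP: "(\<lambda>z. heat d z t) = PP t d (\<lambda>_. 0) ((4 * pi * t) powr (- real d / 2))"
proof
  fix z
  have "exp (- sqnorm d z / (4 * t)) = exp (\<Sum>j<d. - ((z j)^2) / (4*t))"
    unfolding sqnorm_def by (simp add: sum_negf sum_divide_distrib)
  also have "\<dots> = (\<Prod>j<d. hk t 0 (z j))"
    by (simp add: exp_sum hk_0 gk_def)
  finally show "heat d z t = PP t d (\<lambda>_. 0) ((4 * pi * t) powr (- real d / 2)) z"
    unfolding heat_def PP_def by simp
qed

lemma Dmulti_heat: "t > 0 \<Longrightarrow> Dmulti d \<alpha> (\<lambda>z. heat d z t) = PP t d \<alpha> ((4 * pi * t) powr (- real d / 2))"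
  unfolding heat_PP by (subst Dmulti_PP) (auto simp: PP_def intro!: ext prod.cong)



definition MM :: "real \<Rightarrow> nat \<Rightarrow> real" where
  "MM t0 n = integral\<^sup>L lborel (\<lambda>y. y^n * exp (- (y^2) / (4*t0)))"

lemma nd_eq: assumes "(t0::real) > 0"
  shows "y^n * exp (- (y^2) / (4*t0)) = sqrt (4*pi*t0) * (normal_density 0 (sqrt (2*t0)) y * (y - 0)^n)"
proof -
  have "(sqrt (2*t0))\<^sup>2 = 2*t0" using assms by simp
  moreover have "2 * pi * (2 * t0) = 4*pi*t0" by simp
  moreover have "sqrt (4*pi*t0) > 0" using assms by simp
  ultimately show ?thesis using assms by (simp add: normal_density_def field_simps)
qed

lemma MM_hbi_even: assumes t0: "(t0::real) > 0"
  shows "has_bochner_integral lborel (\<lambda>y. y^(2*m) * exp (- (y^2) / (4*t0))) (sqrt (4*pi*t0) * (fact (2*m) * t0^m / fact m))"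
proof -
  have s: "sqrt (2*t0) > 0" using t0 by simp
  have feq: "(\<lambda>y. y^(2*m) * exp (- (y^2) / (4*t0))) = (\<lambda>y. sqrt (4*pi*t0) * (normal_density 0 (sqrt (2*t0)) y * (y - 0)^(2*m)))"
    by (intro ext nd_eq[OF t0])
  have "(2 / (sqrt (2*t0))\<^sup>2) = 1/t0" using t0 by simp
  then have veq: "sqrt (4*pi*t0) * (fact (2 * m) / ((2 / (sqrt (2*t0))\<^sup>2)^m * fact m)) = sqrt (4*pi*t0) * (fact (2*m) * t0^m / fact m)"
    using t0 by (simp add: power_one_over field_simps)
  show ?thesis unfolding feq veq[symmetric]
    by (intro has_bochner_integral_mult_right normal_moment_even s)
qed

lemma MM_hbi_odd: assumes t0: "(t0::real) > 0"
  shows "has_bochner_integral lborel (\<lambda>y. y^(2*m+1) * exp (- (y^2) / (4*t0))) 0"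
proof -
  have s: "sqrt (2*t0) > 0" using t0 by simp
  have feq: "(\<lambda>y. y^(2*m+1) * exp (- (y^2) / (4*t0))) = (\<lambda>y. sqrt (4*pi*t0) * (normal_density 0 (sqrt (2*t0)) y * (y - 0)^(2*m+1)))"
    by (intro ext nd_eq[OF t0])
  have "has_bochner_integral lborel (\<lambda>y. sqrt (4*pi*t0) * (normal_density 0 (sqrt (2*t0)) y * (y - 0)^(2*m+1)))
     (sqrt (4*pi*t0) * 0)"
    by (intro has_bochner_integral_mult_right normal_moment_odd s)
  then show ?thesis unfolding feq by simp
qed

lemma MM_integrable: "(t0::real) > 0 \<Longrightarrow> integrable lborel (\<lambda>y. y^n * exp (- (y^2) / (4*t0)))"
proof -
  assume t0: "(t0::real) > 0"
  obtain m where "n = 2*m \<or> n = 2*m+1" by (metis dvd_mult_div_cancel odd_two_times_div_two_succ dvd_def)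
  then show ?thesis
  proof
    assume "n = 2*m" then show ?thesis using integrable.intros[OF MM_hbi_even[OF t0, of m]] by simp
  next
    assume "n = 2*m+1" then show ?thesis using integrable.intros[OF MM_hbi_odd[OF t0, of m]] by simp
  qed
qed

lemma MM_even: "(t0::real) > 0 \<Longrightarrow> MM t0 (2*m) = sqrt (4*pi*t0) * (fact (2*m) * t0^m / fact m)"
  unfolding MM_def using MM_hbi_even has_bochner_integral_integral_eq by blast

lemma MM_odd: "(t0::real) > 0 \<Longrightarrow> MM t0 (2*m+1) = 0"
  unfolding MM_def using MM_hbi_odd has_bochner_integral_integral_eq by blast

interpretation lbprod: product_sigma_finite "\<lambda>_::nat. lborel::real measure"
  by (simp add: product_sigma_finite_def sigma_finite_lborel)

lemma moment_integral:
  assumes t0: "(t0::real) > 0"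
  shows "integral\<^sup>L (Rd d) (\<lambda>y. mpow d y \<alpha> * u0 d C t0 y) = C * (\<Prod>i<d. MM t0 (\<alpha> i))"
proof -
  have eq: "mpow d y \<alpha> * u0 d C t0 y = C * (\<Prod>i<d. (y i)^(\<alpha> i) * exp (- ((y i)^2) / (4*t0)))" for y
  proof -
    have "exp (- sqnorm d y / (4 * t0)) = exp (\<Sum>j<d. - ((y j)^2) / (4*t0))"
      unfolding sqnorm_def by (simp add: sum_negf sum_divide_distrib)
    also have "\<dots> = (\<Prod>j<d. exp (- ((y j)^2) / (4*t0)))" by (simp add: exp_sum)
    finally show ?thesis unfolding mpow_def u0_def by (simp add: prod.distrib)
  qed
  have "integral\<^sup>L (Rd d) (\<lambda>y. mpow d y \<alpha> * u0 d C t0 y)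
      = C * integral\<^sup>L (Rd d) (\<lambda>y. \<Prod>i<d. (y i)^(\<alpha> i) * exp (- ((y i)^2) / (4*t0)))"
    unfolding eq by simp
  also have "integral\<^sup>L (Rd d) (\<lambda>y. \<Prod>i<d. (y i)^(\<alpha> i) * exp (- ((y i)^2) / (4*t0)))
      = (\<Prod>i<d. MM t0 (\<alpha> i))"
    unfolding Rd_def MM_def
    using lbprod.product_integral_prod[of "{..<d}" "\<lambda>i y. y^(\<alpha> i) * exp (- (y^2) / (4*t0))"] MM_integrable[OF t0]
    by simp
  finally show ?thesis .
qed



lemma finite_multi_idx: "finite (multi_idx d k)"
proof (rule finite_subset)
  show "multi_idx d k \<subseteq> {f. \<forall>x. (x \<in> {..<d} \<longrightarrow> f x \<in> {..k}) \<and> (x \<notin> {..<d} \<longrightarrow> f x = 0)}"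
  proof (intro subsetI CollectI allI conjI impI)
    fix f x assume f: "f \<in> multi_idx d k"
    { assume "x \<in> {..<d}"
      then have "f x \<le> mabs d f" unfolding mabs_def by (intro member_le_sum) auto
      then show "f x \<in> {..k}" using f by (auto simp: multi_idx_def) }
    { assume "x \<notin> {..<d}" then show "f x = 0" using f by (auto simp: multi_idx_def) }
  qed
qed (intro finite_set_of_finite_funs; simp)

lemma mabs_upd: "mabs d (\<alpha>(d := j)) = mabs d \<alpha>"
  unfolding mabs_def by (intro sum.cong) auto

lemma mabs_Suc: "mabs (Suc d) \<beta> = mabs d \<beta> + \<beta> d"
  by (simp add: mabs_def)

definition QQ :: "(nat \<Rightarrow> real) \<Rightarrow> nat \<Rightarrow> nat \<Rightarrow> real" where
  "QQ f d k = (\<Sum>\<alpha>\<in>multi_idx d k. \<Prod>i<d. f (\<alpha> i))"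

lemma multi_idx_0: "multi_idx 0 k = {\<lambda>_. 0}"
  by (auto simp: multi_idx_def mabs_def)

lemma QQ_0: "QQ f 0 k = 1"
  by (simp add: QQ_def multi_idx_0)

lemma QQ_Suc: "QQ f (Suc d) k = (\<Sum>j\<le>k. f j * QQ f d (k - j))"
proof -
  have "(\<Sum>j\<le>k. f j * QQ f d (k - j)) = (\<Sum>j\<le>k. \<Sum>\<alpha>\<in>multi_idx d (k-j). f j * (\<Prod>i<d. f (\<alpha> i)))"
    by (simp add: QQ_def sum_distrib_left)
  also have "\<dots> = (\<Sum>(j,\<alpha>)\<in>Sigma {..k} (\<lambda>j. multi_idx d (k-j)). f j * (\<Prod>i<d. f (\<alpha> i)))"
    by (rule sum.Sigma) (auto simp: finite_multi_idx)
  also have "\<dots> = (\<Sum>\<beta>\<in>multi_idx (Suc d) k. \<Prod>i<Suc d. f (\<beta> i))"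
    apply (rule sum.reindex_bij_witness[where i="\<lambda>\<beta>. (\<beta> d, \<beta>(d := 0))" and j="\<lambda>(j,\<alpha>). \<alpha>(d := j)"])
    subgoal by (auto simp: multi_idx_def)
    subgoal for a using mabs_upd[of d "snd a" "fst a"] by (auto simp: multi_idx_def mabs_Suc)
    subgoal by auto
    subgoal for b using mabs_upd[of d b 0] by (auto simp: multi_idx_def mabs_Suc)
    subgoal for a by (auto intro!: prod.cong)
    done
  finally show ?thesis by (simp add: QQ_def)
qed



definition Ac :: "nat \<Rightarrow> nat \<Rightarrow> real" where "Ac d s = (-1)^s * ((- real d / 2) gchoose s)"

lemma Ac_0: "Ac 0 s = (if s = 0 then 1 else 0)"
  by (simp add: Ac_def gbinomial_0_left)

lemma Ac_at0: "Ac d 0 = 1" by (simp add: Ac_def)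

lemma Ac_conv: "Ac (Suc d) s = (\<Sum>i\<le>s. Ac 1 i * Ac d (s - i))"
proof -
  have "(\<Sum>i\<le>s. Ac 1 i * Ac d (s - i)) = (\<Sum>i\<le>s. (-1)^s * (((-1/2) gchoose i) * ((- real d / 2) gchoose (s - i))))"
  proof (rule sum.cong)
    fix i assume "i \<in> {..s}"
    then have "(-1::real)^i * (-1)^(s-i) = (-1)^s" by (simp add: power_add[symmetric])
    have "Ac 1 i * Ac d (s - i) = ((-1)^i * (-1)^(s-i)) * (((-1/2) gchoose i) * ((- real d / 2) gchoose (s - i)))"
      unfolding Ac_def by (simp add: ac_simps)
    then show "Ac 1 i * Ac d (s - i) = (-1)^s * (((-1/2) gchoose i) * ((- real d / 2) gchoose (s - i)))"
      using \<open>(-1::real)^i * (-1)^(s-i) = (-1)^s\<close> by simp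
  qed simp
  also have "\<dots> = (-1)^s * ((-1/2 + - real d / 2) gchoose s)"
    using gbinomial_Vandermonde[of "-1/2::real" "- real d / 2" s]
    by (simp add: sum_distrib_left[symmetric] atMost_atLeast0)
  also have "(-1/2 + - real d / 2) = - real (Suc d) / 2" by simp
  finally show ?thesis by (simp add: Ac_def)
qed

lemma gchoose_Suc_rec: "(of_nat k + 1) * (a gchoose Suc k) = (a - of_nat k) * (a gchoose k)"
  using gbinomial_absorption[of k a] gbinomial_absorb_comp[of a k] by (metis add.commute of_nat_Suc)

lemma Ac_Suc: "Ac d (Suc s) = Ac d s * ((real d / 2 + real s) / (real s + 1))"
proof -
  have "(real s + 1) * Ac d (Suc s) = (-1)^Suc s * ((real s + 1) * ((- real d / 2) gchoose Suc s))"
    by (simp add: Ac_def)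
  also have "(real s + 1) * ((- real d / 2) gchoose Suc s) = (- real d / 2 - real s) * ((- real d / 2) gchoose s)"
    by (rule gchoose_Suc_rec)
  also have "(-1)^Suc s * ((- real d / 2 - real s) * ((- real d / 2) gchoose s)) = Ac d s * (real d / 2 + real s)"
    by (simp add: Ac_def algebra_simps)
  finally show ?thesis by (simp add: field_simps)
qed

lemma Ac_nonneg: "Ac d s \<ge> 0"
  by (induction s) (auto simp: Ac_at0 Ac_Suc)

lemma Ac_mono: "d \<ge> 2 \<Longrightarrow> Ac d s \<le> Ac d (Suc s)"
proof -
  assume "d \<ge> 2"
  then have "(real d / 2 + real s) / (real s + 1) \<ge> 1" by (simp add: field_simps)
  from mult_left_mono[OF this Ac_nonneg[of d s]] show ?thesis by (simp add: Ac_Suc)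
qed

lemma Ac_ge1: "d \<ge> 2 \<Longrightarrow> Ac d s \<ge> 1"
  by (induction s) (auto simp: Ac_at0 intro: order_trans Ac_mono)

lemma aux_fact: fixes F P Q :: real assumes "P > 0" "Q > 0"
  shows "F / (P^2 * Q) * ((1/2 + real m) / (real m + 1)) = ((2*real m+2)*(2*real m+1)*F) / (((real m+1)*P)^2 * (4*Q))"
proof -
  have e1: "(2*real m+2)*(2*real m+1)*F = (real m+1)*(2*(2*real m+1)*F)" by (simp add: algebra_simps)
  have e2: "((real m+1)*P)^2 * (4*Q) = (real m+1)*((real m+1)*P^2 * (4*Q))" by (simp add: power2_eq_square algebra_simps)
  have "((2*real m+2)*(2*real m+1)*F) / (((real m+1)*P)^2 * (4*Q)) = (2*(2*real m+1)*F) / ((real m+1)*P^2 * (4*Q))"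
    unfolding e1 e2 by (rule mult_divide_mult_cancel_left) simp
  also have "\<dots> = (F*(2*real m+1)) / ((P^2 * Q)*(2*(real m + 1)))"
  proof -
    have "(2*(2*real m+1)*F) = 2 * (F*(2*real m+1))" by simp
    moreover have "((real m+1)*P^2 * (4*Q)) = 2 * ((P^2 * Q)*(2*(real m + 1)))" by simp
    ultimately show ?thesis by (simp only: mult_divide_mult_cancel_left_if) simp
  qed
  also have "\<dots> = F / (P^2 * Q) * ((1/2 + real m) / (real m + 1))"
    by (simp add: field_simps)
  finally show ?thesis by simp
qed

lemma Ac1_fact: "Ac 1 m = fact (2*m) / (fact m ^ 2 * 4^m)"
proof (induction m)
  case 0 then show ?case by (simp add: Ac_at0)
next
  case (Suc m)
  have "Ac 1 (Suc m) = Ac 1 m * ((real 1 / 2 + real m) / (real m + 1))"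
    by (rule Ac_Suc)
  also have "\<dots> = fact (2*m) / (fact m ^ 2 * 4^m) * ((1/2 + real m) / (real m + 1))"
    by (simp only: Suc.IH) simp
  also have "\<dots> = ((2*real m+2)*(2*real m+1)*fact (2*m)) / (((real m+1)*fact m)^2 * (4*4^m))"
    by (rule aux_fact) auto
  also have "(2*real m+2)*(2*real m+1)*fact (2*m) = (fact (2*Suc m) :: real)"
    by (simp add: algebra_simps)
  also have "((real m+1)*fact m)^2 * (4*4^m) = (fact (Suc m) ^ 2 * 4^Suc m :: real)"
    by (simp add: algebra_simps)
  finally show ?case .
qed



lemma sum_even_split:
  fixes G :: "nat \<Rightarrow> real"
  assumes "\<And>m. G (2*m+1) = 0"
  shows "(\<Sum>j\<le>k. G j) = (\<Sum>i\<le>k div 2. G (2*i))"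
proof (induction k)
  case 0 then show ?case by simp
next
  case (Suc k)
  show ?case
  proof (cases "even k")
    case True
    then obtain m where m: "k = 2*m" by auto
    have "Suc k div 2 = k div 2" using m by simp
    moreover have "G (Suc k) = 0" using assms[of m] m by simp
    ultimately show ?thesis using Suc by simp
  next
    case False
    then obtain m where m: "k = 2*m+1" using oddE by blast
    have "Suc k div 2 = Suc (k div 2)" using m by simp
    moreover have "2 * Suc (k div 2) = Suc k" using m by simp
    ultimately show ?thesis using Suc by simp
  qed
qed

lemma sum_triangle:
  fixes g :: "nat \<Rightarrow> nat \<Rightarrow> real"
  shows "(\<Sum>i\<le>n. \<Sum>s\<le>n-i. g i s) = (\<Sum>u\<le>n. \<Sum>i\<le>u. g i (u - i))"
proof -
  have "(\<Sum>i\<le>n. \<Sum>s\<le>n-i. g i s) = (\<Sum>(i,s)\<in>Sigma {..n} (\<lambda>i. {..n-i}). g i s)"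
    by (rule sum.Sigma) auto
  also have "Sigma {..n} (\<lambda>i. {..n-i}) = {(i,j). i+j \<le> n}" by auto
  also have "(\<Sum>(i,s)\<in>{(i,j). i+j \<le> n}. g i s) = (\<Sum>u\<le>n. \<Sum>i\<le>u. g i (u - i))"
    by (rule sum.triangle_reindex_eq)
  finally show ?thesis .
qed

definition fcoef :: "real \<Rightarrow> real \<Rightarrow> nat \<Rightarrow> real" where
  "fcoef c r n = (if even n then c * (-r)^(n div 2) * Ac 1 (n div 2) else 0)"

lemma QQ_formula: "QQ (fcoef c r) d k = c^d * (\<Sum>s\<le>k div 2. (-r)^s * Ac d s)"
proof (induction d arbitrary: k)
  case 0
  have "(\<Sum>s\<le>k div 2. (-r)^s * Ac 0 s) = (\<Sum>s\<in>{0}. (-r)^s * Ac 0 s)"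
    by (rule sum.mono_neutral_right) (auto simp: Ac_0)
  then show ?case by (simp add: QQ_0 Ac_0)
next
  case (Suc d)
  let ?n = "k div 2"
  have "QQ (fcoef c r) (Suc d) k = (\<Sum>j\<le>k. fcoef c r j * (c^d * (\<Sum>s\<le>(k-j) div 2. (-r)^s * Ac d s)))"
    by (simp add: QQ_Suc Suc.IH)
  also have "\<dots> = (\<Sum>i\<le>?n. fcoef c r (2*i) * (c^d * (\<Sum>s\<le>(k-2*i) div 2. (-r)^s * Ac d s)))"
    by (rule sum_even_split) (simp add: fcoef_def)
  also have "\<dots> = (\<Sum>i\<le>?n. \<Sum>s\<le>?n-i. c^Suc d * ((-r)^i * Ac 1 i * ((-r)^s * Ac d s)))"
  proof (rule sum.cong)
    fix i assume "i \<in> {..?n}"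
    then have dv: "(k - 2*i) div 2 = ?n - i" by auto
    have f2: "fcoef c r (2*i) = c * (-r)^i * Ac 1 i" by (simp add: fcoef_def)
    show "fcoef c r (2*i) * (c^d * (\<Sum>s\<le>(k-2*i) div 2. (-r)^s * Ac d s)) =
      (\<Sum>s\<le>?n-i. c^Suc d * ((-r)^i * Ac 1 i * ((-r)^s * Ac d s)))"
      unfolding f2 dv sum_distrib_left by (intro sum.cong refl) (simp add: mult_ac)
  qed simp
  also have "\<dots> = (\<Sum>u\<le>?n. \<Sum>i\<le>u. c^Suc d * ((-r)^i * Ac 1 i * ((-r)^(u-i) * Ac d (u-i))))"
    by (rule sum_triangle)
  also have "\<dots> = (\<Sum>u\<le>?n. c^Suc d * ((-r)^u * Ac (Suc d) u))"
  proof (rule sum.cong)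
    fix u assume "u \<in> {..?n}"
    have "(\<Sum>i\<le>u. c^Suc d * ((-r)^i * Ac 1 i * ((-r)^(u-i) * Ac d (u-i))))
       = (\<Sum>i\<le>u. c^Suc d * (-r)^u * (Ac 1 i * Ac d (u-i)))"
    proof (rule sum.cong)
      fix i assume "i \<in> {..u}"
      then have e: "(-r)^i * (-r)^(u-i) = (-r)^u" by (simp add: power_add[symmetric])
      have "c^Suc d * ((-r)^i * Ac 1 i * ((-r)^(u-i) * Ac d (u-i))) = c^Suc d * ((-r)^i * (-r)^(u-i)) * (Ac 1 i * Ac d (u-i))"
        by (simp add: mult_ac)
      then show "c^Suc d * ((-r)^i * Ac 1 i * ((-r)^(u-i) * Ac d (u-i))) = c^Suc d * (-r)^u * (Ac 1 i * Ac d (u-i))"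
        by (simp only: e)
    qed simp
    then show "(\<Sum>i\<le>u. c^Suc d * ((-r)^i * Ac 1 i * ((-r)^(u-i) * Ac d (u-i)))) = c^Suc d * ((-r)^u * Ac (Suc d) u)"
      unfolding Ac_conv[of d u] by (simp add: sum_distrib_left mult.assoc)
  qed simp
  finally show ?case by (simp add: sum_distrib_left)
qed



definition phi :: "real \<Rightarrow> real \<Rightarrow> nat \<Rightarrow> real \<Rightarrow> real" where
  "phi t0 t n y = (-1)^n / fact n * MM t0 n * hk t n y"

lemma uk_form:
  assumes t0: "t0 > 0" and t: "t > 0"
  shows "uk d C t0 k x t = (C * (4 * pi * t) powr (- real d / 2)) *
     (\<Sum>\<alpha>\<in>multi_idx d k. \<Prod>i<d. phi t0 t (\<alpha> i) (x i))"
proof -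
  let ?K = "(4 * pi * t) powr (- real d / 2)"
  have "uk d C t0 k x t = (\<Sum>\<alpha>\<in>multi_idx d k. (C * ?K) * (\<Prod>i<d. phi t0 t (\<alpha> i) (x i)))"
    unfolding uk_def
  proof (rule sum.cong[OF refl])
    fix \<alpha>
    have s: "(-1::real) ^ mabs d \<alpha> = (\<Prod>i<d. (-1)^(\<alpha> i))" unfolding mabs_def by (rule power_sum)
    have f: "real (mfact d \<alpha>) = (\<Prod>i<d. fact (\<alpha> i))" unfolding mfact_def by simp
    have "(-1) ^ mabs d \<alpha> / real (mfact d \<alpha>) * integral\<^sup>L (Rd d) (\<lambda>y. mpow d y \<alpha> * u0 d C t0 y) *
          Dmulti d \<alpha> (\<lambda>z. heat d z t) x
        = (\<Prod>i<d. (-1)^(\<alpha> i)) / (\<Prod>i<d. fact (\<alpha> i)) * (C * (\<Prod>i<d. MM t0 (\<alpha> i))) * (?K * (\<Prod>i<d. hk t (\<alpha> i) (x i)))"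
      unfolding s f moment_integral[OF t0] Dmulti_heat[OF t] PP_def ..
    also have "\<dots> = (C * ?K) * ((\<Prod>i<d. (-1)^(\<alpha> i)) / (\<Prod>i<d. fact (\<alpha> i)) * (\<Prod>i<d. MM t0 (\<alpha> i)) * (\<Prod>i<d. hk t (\<alpha> i) (x i)))"
      by (simp add: mult_ac)
    also have "(\<Prod>i<d. (-1)^(\<alpha> i)) / (\<Prod>i<d. fact (\<alpha> i)) * (\<Prod>i<d. MM t0 (\<alpha> i)) * (\<Prod>i<d. hk t (\<alpha> i) (x i))
       = (\<Prod>i<d. phi t0 t (\<alpha> i) (x i))"
      unfolding phi_def by (simp add: prod.distrib prod_dividef)
    finally show "(-1) ^ mabs d \<alpha> / real (mfact d \<alpha>) * integral\<^sup>L (Rd d) (\<lambda>y. mpow d y \<alpha> * u0 d C t0 y) *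
          Dmulti d \<alpha> (\<lambda>z. heat d z t) x = (C * ?K) * (\<Prod>i<d. phi t0 t (\<alpha> i) (x i))" .
  qed
  then show ?thesis by (simp add: sum_distrib_left)
qed

lemma phi_zero:
  assumes t0: "t0 > 0" and t: "t > 0"
  shows "phi t0 t n 0 = fcoef (sqrt (4*pi*t0)) (t0/t) n"
proof (cases "even n")
  case True
  then obtain m where m: "n = 2*m" by auto
  have "phi t0 t n 0 = 1 / fact (2*m) * (sqrt (4*pi*t0) * (fact (2*m) * t0^m / fact m)) *
      ((-1)^m * fact (2*m) / (fact m * (4*t)^m))"
    unfolding phi_def m by (simp add: MM_even[OF t0] hk_even0[OF t])
  also have "\<dots> = sqrt (4*pi*t0) * (-(t0/t))^m * (fact (2*m) / (fact m ^ 2 * 4^m))"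
  proof -
    have "(-(t0/t))^m = (-1)^m * (t0^m / t^m)"
      by (induction m) auto
    moreover have "(4*t)^m = 4^m * t^m" by (simp add: power_mult_distrib)
    ultimately show ?thesis using t by (simp add: field_simps power2_eq_square)
  qed
  finally show ?thesis using m Ac1_fact[of m] by (simp add: fcoef_def)
next
  case False
  then obtain m where m: "n = 2*m+1" using oddE by blast
  show ?thesis unfolding phi_def m using MM_odd[OF t0] False m by (simp add: fcoef_def)
qed

lemma uk_zero:
  assumes t0: "t0 > 0" and t: "t > 0"
  shows "uk d C t0 k (\<lambda>_. 0) t = C * (4 * pi * t) powr (- real d / 2) * sqrt (4*pi*t0) ^ d *
      (\<Sum>s\<le>k div 2. (-(t0/t))^s * Ac d s)"
  unfolding uk_form[OF t0 t] phi_zero[OF t0 t] QQ_def[symmetric] QQ_formula by simp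



lemma alt_lemma:
  fixes a :: "nat \<Rightarrow> real"
  assumes mono: "\<And>m. m \<ge> N \<Longrightarrow> a m \<le> a (Suc m)" and nn: "\<And>m. a m \<ge> 0"
  assumes n: "N \<le> n"
  shows "0 \<le> (-1)^n * ((\<Sum>s\<le>n. (-1)^s * a s) - (\<Sum>s<N. (-1)^s * a s))
       \<and> (-1)^n * ((\<Sum>s\<le>n. (-1)^s * a s) - (\<Sum>s<N. (-1)^s * a s)) \<le> a n"
  using n
proof (induction n rule: dec_induct)
  case base
  have "(\<Sum>s\<le>N. (-1)^s * a s) - (\<Sum>s<N. (-1)^s * a s) = (-1)^N * a N"
    by (simp add: lessThan_Suc_atMost[symmetric])
  moreover have "(-1::real)^N * ((-1)^N * a N) = a N"
    by (simp add: mult.assoc[symmetric] power_add[symmetric] flip: mult_2)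
  ultimately show ?case using nn[of N] by simp
next
  case (step n)
  let ?V = "\<lambda>n. (-1)^n * ((\<Sum>s\<le>n. (-1)^s * a s) - (\<Sum>s<N. (-1)^s * a s))"
  have "?V (Suc n) = (-1)^Suc n * (((\<Sum>s\<le>n. (-1)^s * a s) - (\<Sum>s<N. (-1)^s * a s)) + (-1)^Suc n * a (Suc n))"
    by (simp add: algebra_simps)
  also have "\<dots> = a (Suc n) - ?V n"
  proof -
    have "(-1::real)^Suc n * ((-1)^Suc n * a (Suc n)) = a (Suc n)"
      by (simp add: mult.assoc[symmetric] power_add[symmetric] flip: mult_2)
    then show ?thesis by (simp add: algebra_simps)
  qed
  finally have "?V (Suc n) = a (Suc n) - ?V n" .
  moreover have "a n \<le> a (Suc n)" using mono step.hyps by simp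
  ultimately show ?case using step.IH nn[of "Suc n"] by linarith
qed

lemma alt_lower:
  fixes a :: "nat \<Rightarrow> real"
  assumes mono: "\<And>m. m \<ge> N \<Longrightarrow> a m \<le> a (Suc m)" and nn: "\<And>m. a m \<ge> 0"
  assumes n: "N \<le> n"
  shows "\<bar>\<Sum>s\<le>Suc n. (-1)^s * a s\<bar> \<ge> a (Suc n) - a n - \<bar>\<Sum>s<N. (-1)^s * a s\<bar>"
proof -
  let ?S' = "\<Sum>s<N. (-1)^s * a s"
  let ?V = "\<lambda>n. (-1)^n * ((\<Sum>s\<le>n. (-1)^s * a s) - ?S')"
  have v1: "?V n \<le> a n" using alt_lemma[of N a n] mono nn n by blast
  have "?V (Suc n) = (-1)^Suc n * (((\<Sum>s\<le>n. (-1)^s * a s) - ?S') + (-1)^Suc n * a (Suc n))"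
    by (simp add: algebra_simps)
  also have "\<dots> = a (Suc n) - ?V n"
  proof -
    have "(-1::real)^Suc n * ((-1)^Suc n * a (Suc n)) = a (Suc n)"
      by (simp add: mult.assoc[symmetric] power_add[symmetric] flip: mult_2)
    then show ?thesis by (simp add: algebra_simps)
  qed
  finally have "?V (Suc n) \<ge> a (Suc n) - a n" using v1 by linarith
  moreover have "\<bar>?V (Suc n)\<bar> = \<bar>(\<Sum>s\<le>Suc n. (-1)^s * a s) - ?S'\<bar>"
    by (simp add: abs_mult)
  ultimately show ?thesis by linarith
qed

lemma bernoulli_ineq: "(x::real) \<ge> 0 \<Longrightarrow> 1 + real n * x \<le> (1 + x)^n"
proof (induction n)
  case 0 then show ?case by simp
next
  case (Suc n)
  have "1 + real (Suc n) * x \<le> (1 + real n * x) * (1 + x)"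
    using Suc.prems by (simp add: algebra_simps)
  also have "\<dots> \<le> (1 + x)^n * (1 + x)"
    using Suc by (intro mult_right_mono) auto
  finally show ?case by (simp add: mult.commute)
qed

lemma neg_pow: "(- x :: real)^n = (-1)^n * x^n"
  by (induction n) auto

definition EE :: "nat \<Rightarrow> real \<Rightarrow> nat \<Rightarrow> real" where
  "EE d r n = (\<Sum>s\<le>n. (-r)^s * Ac d s)"

lemma EE_alt: "EE d r n = (\<Sum>s\<le>n. (-1)^s * (r^s * Ac d s))"
  unfolding EE_def by (intro sum.cong refl) (simp only: neg_pow[of r] mult.assoc)

lemma EE_d2:
  assumes d: "d \<ge> 2" and r: "r > 1"
  shows "\<bar>EE d r n\<bar> \<ge> (r - 1) * r powr (real n - 1)"
proof (cases n)
  case 0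
  have "(r - 1) * r powr (-1) \<le> 1" using r by (simp add: powr_minus field_simps)
  then show ?thesis using 0 by (simp add: EE_def Ac_at0)
next
  case (Suc m)
  let ?a = "\<lambda>s. r^s * Ac d s"
  have mono: "?a s \<le> ?a (Suc s)" for s
  proof -
    have "r^s * Ac d s \<le> r^s * Ac d (Suc s)" using Ac_mono[OF d] r by (intro mult_left_mono) auto
    also have "\<dots> \<le> r^Suc s * Ac d (Suc s)" using r Ac_nonneg[of d "Suc s"]
      by (intro mult_right_mono) auto
    finally show ?thesis .
  qed
  have nn: "?a s \<ge> 0" for s using r Ac_nonneg[of d s] by simp
  have "\<bar>EE d r (Suc m)\<bar> \<ge> ?a (Suc m) - ?a m - \<bar>\<Sum>s<0. (-1)^s * ?a s\<bar>"
    unfolding EE_alt by (rule alt_lower[where N=0 and a="\<lambda>s. r^s * Ac d s"]) (rule mono, rule nn, simp)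
  then have "\<bar>EE d r (Suc m)\<bar> \<ge> r^m * (r * Ac d (Suc m) - Ac d m)" by (simp add: algebra_simps)
  moreover have "r * Ac d (Suc m) - Ac d m \<ge> r - 1"
  proof -
    have "r * Ac d (Suc m) - Ac d m \<ge> r * Ac d m - Ac d m"
      using Ac_mono[OF d, of m] r by simp
    also have "r * Ac d m - Ac d m = (r - 1) * Ac d m" by (simp add: algebra_simps)
    also have "\<dots> \<ge> (r - 1) * 1" using Ac_ge1[OF d, of m] r by (intro mult_left_mono) auto
    finally show ?thesis by simp
  qed
  ultimately have "\<bar>EE d r (Suc m)\<bar> \<ge> r^m * (r - 1)"
    by (meson order_trans mult_left_mono r less_imp_le zero_le_power order_less_imp_le zero_less_one less_trans)
  moreover have "r powr (real (Suc m) - 1) = r^m" using r by (simp add: powr_realpow)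
  ultimately show ?thesis using Suc by (simp add: mult.commute)
qed



lemma Ac1_Suc: "Ac 1 (Suc s) = Ac 1 s * ((1/2 + real s) / (real s + 1))"
  using Ac_Suc[of 1 s] by simp

lemma Ac1_Suc0: "Ac (Suc 0) (Suc s) = Ac (Suc 0) s * ((1/2 + real s) / (real s + 1))"
  using Ac1_Suc by simp

lemma Ac1_sq: "s \<ge> 1 \<Longrightarrow> 4 * real s * (Ac 1 s)^2 \<ge> 1"
proof (induction s rule: dec_induct)
  case base
  have h: "Ac 1 1 = 1/2" using Ac1_Suc[of 0] by (simp add: Ac_at0)
  show ?case unfolding h by (simp add: power2_eq_square)
next
  case (step s)
  have s1: "real s \<ge> 1" using step.hyps by simp
  have hB: "Ac 1 (Suc s) * (real s + 1) = Ac 1 s * (1/2 + real s)"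
    using Ac1_Suc[of s] by (simp add: field_simps)
  have hA: "(Ac 1 s)^2 \<ge> 1 / (4 * real s)" using step.IH s1 by (simp add: field_simps)
  have "4 * (Ac 1 s * (1/2 + real s))^2 = 4 * (Ac 1 s)^2 * (1/2 + real s)^2"
    by (simp add: power_mult_distrib)
  also have "\<dots> \<ge> 4 * (1 / (4 * real s)) * (1/2 + real s)^2"
    using hA by (intro mult_right_mono mult_left_mono) auto
  finally have h1: "4 * (Ac 1 s * (1/2 + real s))^2 \<ge> 4 * (1 / (4 * real s)) * (1/2 + real s)^2" .
  have h2: "4 * (1 / (4 * real s)) * (1/2 + real s)^2 \<ge> real s + 1"
    using s1 by (simp add: field_simps power2_eq_square)
  have "(real s + 1) * (4 * real (Suc s) * (Ac 1 (Suc s))^2) = 4 * (Ac 1 (Suc s) * (real s + 1))^2"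
    by (simp add: power2_eq_square algebra_simps)
  also have "\<dots> = 4 * (Ac 1 s * (1/2 + real s))^2" by (simp only: hB)
  finally have "(real s + 1) * (4 * real (Suc s) * (Ac 1 (Suc s))^2) \<ge> (real s + 1) * 1"
    using h1 h2 by simp
  then show ?case using s1 by (simp only: mult_le_cancel_left_pos)
qed

lemma Ac1_lower: "s \<ge> 1 \<Longrightarrow> Ac 1 s \<ge> sqrt (1 / real s) / 2"
proof -
  assume s: "s \<ge> 1"
  have "1 / (4 * real s) \<le> (Ac 1 s)^2" using Ac1_sq[OF s] s by (simp add: field_simps)
  then have "sqrt (1 / (4 * real s)) \<le> sqrt ((Ac 1 s)^2)" by (rule real_sqrt_le_mono)
  also have "\<dots> = Ac 1 s" using Ac_nonneg[of 1 s] by simp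
  also have "sqrt (1 / (4 * real s)) = sqrt (1 / real s) / 2"
    by (simp add: real_sqrt_divide real_sqrt_mult)
  finally show ?thesis .
qed

lemma growth:
  assumes r: "r > 1" and s: "s \<ge> 1"
  shows "r^s * sqrt (1 / real s) \<ge> real s * (sqrt r - 1)^2"
proof -
  let ?q = "sqrt r"
  have q: "?q > 1" using r by simp
  have "real s * (?q - 1) \<le> 1 + real s * (?q - 1)" by simp
  also have "\<dots> \<le> (1 + (?q - 1))^s" using q by (intro bernoulli_ineq) simp
  finally have b: "real s * (?q - 1) \<le> ?q^s" by simp
  have "(real s * (?q - 1))^2 \<le> (?q^s)^2"
    using b q by (intro power_mono) auto
  also have "(?q^s)^2 = (?q^2)^s" by (simp only: power_mult[symmetric] mult.commute)
  also have "?q^2 = r" using r by simp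
  finally have h1: "(real s)^2 * (?q - 1)^2 \<le> r^s" by (simp add: power_mult_distrib)
  have "1 / real s \<le> sqrt (1 / real s)"
    using s by (intro real_le_rsqrt) (simp add: power2_eq_square field_simps)
  then have "r^s * (1 / real s) \<le> r^s * sqrt (1 / real s)" using r by (intro mult_left_mono) auto
  moreover have "real s * (?q - 1)^2 \<le> r^s * (1 / real s)"
    using h1 s by (simp add: field_simps power2_eq_square)
  ultimately show ?thesis by linarith
qed

lemma EE_d1:
  assumes r: "r > 1"
  shows "\<exists>N\<ge>1. \<forall>s\<ge>N. \<bar>EE 1 r (Suc s)\<bar> \<ge> (r - 1) / (16 * r) * r^(Suc s) * sqrt (1 / real s)"
proof -
  let ?a = "\<lambda>s. r^s * Ac 1 s"
  define N1 where "N1 = nat \<lceil>1 / (r - 1)\<rceil> + 1"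
  have N1: "N1 \<ge> 1" "real N1 * (r - 1) \<ge> 1"
  proof -
    show "N1 \<ge> 1" by (simp add: N1_def)
    have "real N1 \<ge> 1 / (r - 1)" unfolding N1_def by linarith
    then show "real N1 * (r - 1) \<ge> 1" using r by (simp add: field_simps)
  qed
  have inc: "?a (Suc m) - ?a m \<ge> r^m * Ac 1 m * ((r - 1) / 4)" if m: "m \<ge> N1" for m
  proof -
    have "real m * (r - 1) \<ge> real N1 * (r - 1)" using m r by (intro mult_right_mono) auto
    then have hm: "real m * (r - 1) \<ge> 1" using N1 by linarith
    have key: "(r - 1) / 4 \<le> r * ((1/2 + real m) / (real m + 1)) - 1"
    proof -
      have "(r - 1) / 4 * (real m + 1) \<le> r * (1/2 + real m) - (real m + 1)"
      proof -
        have e1: "(r-1)/4*(real m+1) = (r*real m + r - real m - 1)/4" by (simp add: algebra_simps)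
        have e2: "r*(1/2+real m) - (real m+1) = r*real m + r/2 - real m - 1" by (simp add: algebra_simps)
        have e3: "real m*(r-1) = r*real m - real m" by (simp add: algebra_simps)
        show ?thesis unfolding e1 e2 using hm r unfolding e3 by (simp add: field_simps)
      qed
      then show ?thesis by (simp add: field_simps)
    qed
    have "?a (Suc m) - ?a m = r^m * Ac 1 m * (r * ((1/2 + real m) / (real m + 1)) - 1)"
      by (simp only: Ac1_Suc) (simp add: algebra_simps)
    also have "\<dots> \<ge> r^m * Ac 1 m * ((r - 1) / 4)"
      using key r Ac_nonneg[of 1 m] by (intro mult_left_mono) auto
    finally show ?thesis .
  qed
  have mono: "?a m \<le> ?a (Suc m)" if "m \<ge> N1" for m
  proof -
    have "0 \<le> r^m * Ac 1 m * ((r - 1) / 4)" using r Ac_nonneg[of 1 m] by simp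
    then show ?thesis using inc[OF that] by linarith
  qed
  have nn: "?a m \<ge> 0" for m using r Ac_nonneg[of 1 m] by simp
  define K0 where "K0 = \<bar>\<Sum>s<N1. (-1)^s * ?a s\<bar>"
  define N2 where "N2 = nat \<lceil>16 * K0 / ((r - 1) * (sqrt r - 1)^2)\<rceil> + 1"
  have q: "sqrt r - 1 > 0" using r by simp
  have pos: "(r - 1) * (sqrt r - 1)^2 > 0" using r q by simp
  define N where "N = max N1 N2"
  have "\<bar>EE 1 r (Suc s)\<bar> \<ge> (r - 1) / (16 * r) * r^(Suc s) * sqrt (1 / real s)" if s: "s \<ge> N" for s
  proof -
    have sN1: "s \<ge> N1" and sN2: "s \<ge> N2" using s by (auto simp: N_def)
    have s1: "s \<ge> 1" using sN1 N1 by simp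
    have "\<bar>EE 1 r (Suc s)\<bar> \<ge> ?a (Suc s) - ?a s - K0"
      unfolding EE_alt K0_def by (rule alt_lower[where N=N1 and a="\<lambda>s. r^s * Ac 1 s"]) (rule mono, simp, rule nn, rule sN1)
    moreover have "?a (Suc s) - ?a s \<ge> r^s * (sqrt (1 / real s) / 2) * ((r - 1) / 4)"
    proof -
      have "r^s * (sqrt (1 / real s) / 2) \<le> r^s * Ac 1 s"
        using Ac1_lower[OF s1] r by (intro mult_left_mono) auto
      then have "r^s * (sqrt (1 / real s) / 2) * ((r - 1) / 4) \<le> r^s * Ac 1 s * ((r - 1) / 4)"
        using r by (intro mult_right_mono) auto
      then show ?thesis using inc[OF sN1] by linarith
    qed
    moreover have "r^s * sqrt (1 / real s) * ((r - 1) / 16) \<ge> K0"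
    proof -
      have "real s \<ge> 16 * K0 / ((r - 1) * (sqrt r - 1)^2)" using sN2 unfolding N2_def by linarith
      then have "real s * ((r - 1) * (sqrt r - 1)^2) \<ge> 16 * K0" using pos by (simp add: field_simps)
      moreover have "r^s * sqrt (1 / real s) * (r - 1) \<ge> real s * (sqrt r - 1)^2 * (r - 1)"
        using growth[OF r s1] r by (intro mult_right_mono) auto
      ultimately show ?thesis by (simp add: algebra_simps)
    qed
    moreover have "r^s * (sqrt (1 / real s) / 2) * ((r - 1) / 4) = 2 * (r^s * sqrt (1 / real s) * ((r - 1) / 16))"
      by (simp add: field_simps)
    ultimately have "\<bar>EE 1 r (Suc s)\<bar> \<ge> r^s * sqrt (1 / real s) * ((r - 1) / 16)"
      by linarith
    also have "r^s * sqrt (1 / real s) * ((r - 1) / 16) = (r - 1) / (16 * r) * r^(Suc s) * sqrt (1 / real s)"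
      using r by (simp add: field_simps)
    finally show ?thesis .
  qed
  moreover have "N \<ge> 1" using N1 by (simp add: N_def)
  ultimately show ?thesis by blast
qed



lemma box_from_tendsto:
  fixes F :: "(nat \<Rightarrow> real) \<Rightarrow> real"
  assumes lim: "(F \<longlongrightarrow> F z) (INF i\<in>{..<d}. filtercomap (\<lambda>x. x i) (nhds 0))" and e: "\<epsilon> > 0"
  shows "\<exists>\<delta>>0. \<forall>x. (\<forall>i<d. \<bar>x i\<bar> < \<delta>) \<longrightarrow> \<bar>F x - F z\<bar> < \<epsilon>"
proof -
  have "eventually (\<lambda>x. dist (F x) (F z) < \<epsilon>) (INF i\<in>{..<d}. filtercomap (\<lambda>x. x i) (nhds 0))"
    using tendstoD[OF lim e] .
  then obtain Q where Q: "\<forall>i\<in>{..<d}. eventually (Q i) (filtercomap (\<lambda>x. x i) (nhds (0::real)))"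
     "\<forall>y. (\<forall>i\<in>{..<d}. Q i y) \<longrightarrow> dist (F y) (F z) < \<epsilon>"
    unfolding eventually_INF_finite[OF finite_lessThan] by blast
  have "\<forall>i\<in>{..<d}. \<exists>R. eventually R (nhds (0::real)) \<and> (\<forall>x. R (x i) \<longrightarrow> Q i x)"
    using Q(1) unfolding eventually_filtercomap by blast
  then obtain R where R: "\<forall>i\<in>{..<d}. eventually (R i) (nhds (0::real)) \<and> (\<forall>x. R i (x i) \<longrightarrow> Q i x)"
    by metis
  have "eventually (\<lambda>v. \<forall>i\<in>{..<d}. R i v) (nhds (0::real))"
    using R by (intro eventually_ball_finite) auto
  then obtain \<delta> where \<delta>: "\<delta> > 0" "\<forall>v. dist v 0 < \<delta> \<longrightarrow> (\<forall>i\<in>{..<d}. R i v)"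
    unfolding eventually_nhds_metric by blast
  have "\<bar>F x - F z\<bar> < \<epsilon>" if x: "\<forall>i<d. \<bar>x i\<bar> < \<delta>" for x
  proof -
    have "\<forall>i\<in>{..<d}. Q i x"
    proof
      fix i assume i: "i \<in> {..<d}"
      then have "R i (x i)" using \<delta>(2) x by (auto simp: dist_real_def)
      then show "Q i x" using R i by blast
    qed
    then show ?thesis using Q(2) by (auto simp: dist_real_def)
  qed
  then show ?thesis using \<delta>(1) by blast
qed

lemma esssup_ge:
  fixes F :: "(nat \<Rightarrow> real) \<Rightarrow> real"
  assumes cont: "\<And>\<epsilon>. \<epsilon> > 0 \<Longrightarrow> \<exists>\<delta>>0. \<forall>x. (\<forall>i<d. \<bar>x i\<bar> < \<delta>) \<longrightarrow> \<bar>F x - F z\<bar> < \<epsilon>"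
  shows "esssup (Rd d) (\<lambda>x. ereal \<bar>F x\<bar>) \<ge> ereal \<bar>F z\<bar>"
proof (cases "(\<lambda>x. ereal \<bar>F x\<bar>) \<in> borel_measurable (Rd d)")
  case False
  then show ?thesis by (simp add: esssup_non_measurable)
next
  case True
  show ?thesis unfolding esssup_eq_AE[OF True]
  proof (rule Inf_greatest, rule ccontr)
    fix w assume w: "w \<in> {w. AE x in Rd d. ereal \<bar>F x\<bar> \<le> w}" and nle: "\<not> ereal \<bar>F z\<bar> \<le> w"
    then have "w < ereal \<bar>F z\<bar>" by simp
    then obtain v where v: "w < ereal v" "ereal v < ereal \<bar>F z\<bar>" using ereal_dense2 by blast
    then have "\<bar>F z\<bar> - v > 0" by simp
    from cont[OF this] obtain \<delta> where \<delta>: "\<delta> > 0" "\<forall>x. (\<forall>i<d. \<bar>x i\<bar> < \<delta>) \<longrightarrow> \<bar>F x - F z\<bar> < \<bar>F z\<bar> - v"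
      by blast
    define B where "B = PiE {..<d} (\<lambda>_. {-\<delta><..<\<delta>::real})"
    have inB: "ereal \<bar>F x\<bar> > w" if "x \<in> B" for x
    proof -
      have "\<forall>i<d. \<bar>x i\<bar> < \<delta>" using that unfolding B_def PiE_iff by (auto simp: abs_less_iff) (metis lessThan_iff minus_less_iff)
      then have "\<bar>F x - F z\<bar> < \<bar>F z\<bar> - v" using \<delta>(2) by blast
      then have "\<bar>F x\<bar> > v" by linarith
      then have "ereal v < ereal \<bar>F x\<bar>" by simp
      then show ?thesis using v(1) by (meson less_trans)
    qed
    have w': "AE x in Rd d. ereal \<bar>F x\<bar> \<le> w" using w by simp
    have "AE x in Rd d. x \<notin> B"
      using w' by (rule eventually_mono) (use inB in fastforce)
    moreover have Bs: "B \<in> sets (Rd d)" unfolding B_def Rd_def by (intro sets_PiM_I_finite) auto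
    ultimately have "B \<in> null_sets (Rd d)" using AE_iff_null_sets by blast
    then have "emeasure (Rd d) B = 0" by auto
    moreover have "emeasure (Rd d) B = (\<Prod>i<d. ennreal (2 * \<delta>))"
      unfolding B_def Rd_def using \<delta>(1) by (subst lbprod.emeasure_PiM) auto
    moreover have "(\<Prod>i<d. ennreal (2 * \<delta>)) \<noteq> 0"
      using \<delta>(1) by (simp add: prod_ennreal)
    ultimately show False by simp
  qed
qed

lemma uk_tendsto:
  assumes t0: "t0 > 0" and t: "t > 0"
  shows "((\<lambda>x. uk d C t0 k x t) \<longlongrightarrow> uk d C t0 k (\<lambda>_. 0) t) (INF i\<in>{..<d}. filtercomap (\<lambda>x. x i) (nhds 0))"
  unfolding uk_form[OF t0 t]
proof (intro tendsto_mult tendsto_const tendsto_sum tendsto_prod)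
  fix \<alpha> i assume "i \<in> {..<d}"
  then have "((\<lambda>x. x i) \<longlongrightarrow> (0::real)) (INF i\<in>{..<d}. filtercomap (\<lambda>x. x i) (nhds 0))"
    by (intro filterlim_INF'[of i]) (auto intro: filterlim_filtercomap)
  moreover have "isCont (phi t0 t (\<alpha> i)) 0"
    unfolding phi_def using hk_cont[OF t] by (intro continuous_intros) auto
  ultimately show "((\<lambda>x. phi t0 t (\<alpha> i) (x i)) \<longlongrightarrow> phi t0 t (\<alpha> i) ((\<lambda>_. 0) i)) (INF i\<in>{..<d}. filtercomap (\<lambda>x. x i) (nhds 0))"
    using isCont_tendsto_compose by fastforce
qed

lemma esssup_uk:
  assumes t0: "t0 > 0" and t: "t > 0"
  shows "esssup (Rd d) (\<lambda>x. ereal \<bar>uk d C t0 k x t\<bar>) \<ge> ereal \<bar>uk d C t0 k (\<lambda>_. 0) t\<bar>"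
  by (rule esssup_ge[where F="\<lambda>x. uk d C t0 k x t"], rule box_from_tendsto[OF uk_tendsto[OF t0 t]])



theorem mainTheorem4:
  fixes d :: nat and C t0 t :: real
  assumes "d \<ge> 1" and "C > 0" and "t0 > 0" and "0 < t" and "t < t0"
  shows "((\<lambda>k. esssup (Rd d) (\<lambda>x. ereal \<bar>uk d C t0 k x t\<bar>)) \<longlongrightarrow> \<infinity>) sequentially
    \<and> (d = 1 \<longrightarrow> (\<exists>B>0. \<forall>\<^sub>F k in sequentially.
          \<bar>uk d C t0 k (\<lambda>_. 0) t\<bar> \<ge>
            B * (t0 / t) ^ (k div 2) * sqrt (1 / (real (k div 2) - 1))))
    \<and> (d \<ge> 2 \<longrightarrow> (\<exists>c>0. \<forall>k::nat.
          \<bar>uk d C t0 k (\<lambda>_. 0) t\<bar> \<ge>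
            c * (t0 / t - 1) * (t0 / t) powr (real (k div 2) - 1)))"
proof -
  note d = assms(1) and C = assms(2) and t0 = assms(3) and t = assms(4) and tt0 = assms(5)
  define r where "r = t0 / t"
  have r: "r > 1" unfolding r_def using t tt0 by simp
  define P where "P = C * (4*pi*t) powr (- real d / 2) * sqrt (4*pi*t0) ^ d"
  have P: "P > 0" unfolding P_def using C t t0 by simp
  have U: "uk d C t0 k (\<lambda>_. 0) t = P * EE d r (k div 2)" for k
    using uk_zero[OF t0 t, of d C k] unfolding EE_def P_def r_def by simp
  have absU: "\<bar>uk d C t0 k (\<lambda>_. 0) t\<bar> = P * \<bar>EE d r (k div 2)\<bar>" for k
    using U P by (simp add: abs_mult)
  have D2: "\<bar>uk d C t0 k (\<lambda>_. 0) t\<bar> \<ge> P * (r - 1) * r powr (real (k div 2) - 1)" if d2: "d \<ge> 2" for k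
    using EE_d2[OF d2 r, of "k div 2"] P unfolding absU by (simp add: mult.assoc mult_left_mono)
  obtain N where N: "N \<ge> 1" "\<forall>s\<ge>N. \<bar>EE 1 r (Suc s)\<bar> \<ge> (r - 1) / (16 * r) * r^(Suc s) * sqrt (1 / real s)"
    using EE_d1[OF r] by blast
  define B where "B = P * ((r - 1) / (16 * r))"
  have B: "B > 0" unfolding B_def using P r by simp
  have D1: "\<bar>uk d C t0 k (\<lambda>_. 0) t\<bar> \<ge> B * r ^ (k div 2) * sqrt (1 / (real (k div 2) - 1))"
    if d1: "d = 1" and k: "k div 2 \<ge> Suc N" for k
  proof -
    define s where "s = k div 2 - 1"
    have ks: "k div 2 = Suc s" and sN: "s \<ge> N" using k unfolding s_def by auto
    have "\<bar>EE 1 r (Suc s)\<bar> \<ge> (r - 1) / (16 * r) * r^(Suc s) * sqrt (1 / real s)"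
      using N(2) sN by blast
    then have "P * \<bar>EE 1 r (Suc s)\<bar> \<ge> P * ((r - 1) / (16 * r) * r^(Suc s) * sqrt (1 / real s))"
      using P by (intro mult_left_mono) auto
    moreover have e1: "\<bar>uk d C t0 k (\<lambda>_. 0) t\<bar> = P * \<bar>EE 1 r (Suc s)\<bar>"
      using absU[of k] ks d1 by simp
    moreover have e2: "B * r ^ (k div 2) * sqrt (1 / (real (k div 2) - 1)) = P * ((r - 1) / (16 * r) * r^(Suc s) * sqrt (1 / real s))"
      unfolding ks B_def by (simp add: mult_ac)
    ultimately show ?thesis by simp
  qed
  have DIV: "\<forall>\<^sub>F k in sequentially. \<bar>uk d C t0 k (\<lambda>_. 0) t\<bar> \<ge> L" for L
  proof (cases "d = 1")
    case True
    have q: "(sqrt r - 1)^2 > 0" using r by simp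
    define M where "M = nat \<lceil>L / (B * r * (sqrt r - 1)^2)\<rceil>"
    have "\<bar>uk d C t0 k (\<lambda>_. 0) t\<bar> \<ge> L" if k: "k \<ge> 2 * (Suc N + M + 1)" for k
    proof -
      define s where "s = k div 2 - 1"
      have kN: "k div 2 \<ge> Suc N" using k by auto
      have ks: "k div 2 = Suc s" and s1: "s \<ge> 1" and sM: "s \<ge> M" using k N(1) unfolding s_def by auto
      have "\<bar>uk d C t0 k (\<lambda>_. 0) t\<bar> \<ge> B * r ^ (Suc s) * sqrt (1 / real s)"
        using D1[OF True kN] unfolding ks by simp
      also have "B * r ^ (Suc s) * sqrt (1 / real s) = (B * r) * (r^s * sqrt (1 / real s))"
        by (simp add: mult_ac)
      also have "\<dots> \<ge> (B * r) * (real s * (sqrt r - 1)^2)"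
        using growth[OF r s1] B r by (intro mult_left_mono) auto
      also have "(B * r) * (real s * (sqrt r - 1)^2) \<ge> L"
      proof -
        have "real s \<ge> L / (B * r * (sqrt r - 1)^2)" using sM unfolding M_def by linarith
        then show ?thesis using B r q by (simp add: field_simps)
      qed
      finally show ?thesis .
    qed
    then show ?thesis unfolding eventually_sequentially by blast
  next
    case False
    then have d2: "d \<ge> 2" using d by simp
    define M where "M = nat \<lceil>L * r / (P * (r - 1)^2)\<rceil>"
    have pr: "P * (r - 1)^2 > 0" using P r by simp
    have "\<bar>uk d C t0 k (\<lambda>_. 0) t\<bar> \<ge> L" if k: "k \<ge> 2 * M" for k
    proof -
      define n where "n = k div 2"
      have nM: "n \<ge> M" using k unfolding n_def by auto
      have "\<bar>uk d C t0 k (\<lambda>_. 0) t\<bar> \<ge> P * (r - 1) * r powr (real n - 1)"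
        using D2[OF d2, of k] unfolding n_def .
      also have "r powr (real n - 1) = r^n / r"
        using r by (simp add: powr_diff powr_realpow)
      also have "P * (r - 1) * (r^n / r) \<ge> P * (r - 1) * (real n * (r - 1) / r)"
      proof -
        have "real n * (r - 1) \<le> 1 + real n * (r - 1)" by simp
        also have "\<dots> \<le> (1 + (r - 1))^n" using r by (intro bernoulli_ineq) simp
        finally have "real n * (r - 1) \<le> r^n" by simp
        then have "real n * (r - 1) / r \<le> r^n / r" using r by (simp add: divide_right_mono)
        then show ?thesis using P r by (intro mult_left_mono) auto
      qed
      also have "P * (r - 1) * (real n * (r - 1) / r) \<ge> L"
      proof -
        have "real n \<ge> L * r / (P * (r - 1)^2)" using nM unfolding M_def by linarith
        then have "real n * (P * (r - 1)^2) \<ge> L * r" using pr by (simp add: field_simps)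
        then show ?thesis using r by (simp add: field_simps power2_eq_square)
      qed
      finally show ?thesis .
    qed
    then show ?thesis unfolding eventually_sequentially by blast
  qed
  have part1: "((\<lambda>k. esssup (Rd d) (\<lambda>x. ereal \<bar>uk d C t0 k x t\<bar>)) \<longlongrightarrow> \<infinity>) sequentially"
    unfolding tendsto_PInfty
  proof
    fix R :: real
    show "\<forall>\<^sub>F k in sequentially. ereal R < esssup (Rd d) (\<lambda>x. ereal \<bar>uk d C t0 k x t\<bar>)"
      using DIV[of "R + 1"]
    proof (rule eventually_mono)
      fix k assume "\<bar>uk d C t0 k (\<lambda>_. 0) t\<bar> \<ge> R + 1"
      then have "ereal R < ereal \<bar>uk d C t0 k (\<lambda>_. 0) t\<bar>" by simp
      also have "\<dots> \<le> esssup (Rd d) (\<lambda>x. ereal \<bar>uk d C t0 k x t\<bar>)" by (rule esssup_uk[OF t0 t])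
      finally show "ereal R < esssup (Rd d) (\<lambda>x. ereal \<bar>uk d C t0 k x t\<bar>)" .
    qed
  qed
  have part2: "d = 1 \<longrightarrow> (\<exists>B>0. \<forall>\<^sub>F k in sequentially.
          \<bar>uk d C t0 k (\<lambda>_. 0) t\<bar> \<ge> B * (t0 / t) ^ (k div 2) * sqrt (1 / (real (k div 2) - 1)))"
  proof
    assume d1: "d = 1"
    have "\<forall>\<^sub>F k in sequentially. \<bar>uk d C t0 k (\<lambda>_. 0) t\<bar> \<ge> B * r ^ (k div 2) * sqrt (1 / (real (k div 2) - 1))"
      unfolding eventually_sequentially
      by (rule exI[of _ "2 * Suc N"]) (auto intro!: D1[OF d1])
    then show "\<exists>B>0. \<forall>\<^sub>F k in sequentially.
          \<bar>uk d C t0 k (\<lambda>_. 0) t\<bar> \<ge> B * (t0 / t) ^ (k div 2) * sqrt (1 / (real (k div 2) - 1))"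
      using B unfolding r_def by blast
  qed
  have part3: "d \<ge> 2 \<longrightarrow> (\<exists>c>0. \<forall>k::nat.
          \<bar>uk d C t0 k (\<lambda>_. 0) t\<bar> \<ge> c * (t0 / t - 1) * (t0 / t) powr (real (k div 2) - 1))"
    using D2 P unfolding r_def by blast
  show ?thesis using part1 part2 part3 by blast
qed


end
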